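(* Let $A_0, A_1 : [\sigma_0,\sigma_1]\times[\tau_0,\tau_1] \to \mathbb{C}^{n\times n}$ be continuously differentiable matrix-valued functions. For $\sigma\in[\sigma_0,\sigma_1]$ and $\tau\in[\tau_0,\tau_1]$ define the path-ordered (product-integral) phase factors $$P(\sigma,\sigma_0;\tau)=\prod_{\sigma_0}^{\sigma} e^{A_1(\sigma';\tau)\,d\sigma'},\qquad Q(\sigma;\tau,\tau_0)=\prod_{\tau_0}^{\tau} e^{A_0(\sigma;\tau')\,d\tau'},$$ the matrix $$T(\sigma;\tau)=P(\sigma,\sigma_0;\tau)\,Q(\sigma_0;\tau,\tau_0),$$ and the loop operator $$W=Q^{-1}(\sigma_0;\tau,\tau_0)\,P^{-1}(\sigma,\sigma_0;\tau)\,Q(\sigma;\tau,\tau_0)\,P(\sigma,\sigma_0;\tau_0)=T^{-1}(\sigma;\tau)\,Q(\sigma;\tau,\tau_0)\,P(\sigma,\sigma_0;\tau_0).$$ Then $$W=\prod_{\tau_0}^{\tau} e^{\,T^{-1}(\sigma;\tau')\,[A_0(\sigma;\tau')-L_\tau T(\sigma;\tau')]\,T(\sigma;\tau')\,d\tau'},$$ where $L_\tau T(\sigma;\tau')=\big(\partial_{\tau'}T(\sigma;\tau')\big)\,T^{-1}(\sigma;\tau')$.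
   Context: Product integral: for a continuous $B:[a,b]\to\mathbb{C}^{n\times n}$ and $x\in[a,b]$, $\prod_a^x e^{B(s)ds}$ is the limit, as the mesh of the partition $a=s_0<s_1<\dots<s_m=x$ tends to $0$, of the ordered product $e^{B(s_m)\Delta s_m}e^{B(s_{m-1})\Delta s_{m-1}}\cdots e^{B(s_1)\Delta s_1}$ with $\Delta s_k=s_k-s_{k-1}$ (later points to the left); equivalently it is the unique solution $F(x)$ of $F'(x)=B(x)F(x)$, $F(a)=I$. It is an invertible matrix, and $P^{-1},Q^{-1},T^{-1}$ denote matrix inverses. In $P(\sigma,\sigma_0;\tau)$ the ordering is in $\sigma'$ with $\tau$ a fixed parameter; in $Q(\sigma;\tau,\tau_0)$ the ordering is in $\tau'$ with $\sigma$ a fixed parameter. The operator $W$ is the holonomy (Wilson loop) around the boundary of the parameter rectangle $[\sigma_0,\sigma]\times[\tau_0,\tau]$. *)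

theory Defs
  imports "HOL-Analysis.Analysis"
begin

type_synonym 'n cmat = "complex ^ 'n ^ 'n"

definition prodint :: "(real \<Rightarrow> 'n::finite cmat) \<Rightarrow> real \<Rightarrow> real \<Rightarrow> 'n cmat" where
  "prodint B a x = (THE M. \<exists>F. F a = mat 1 \<and>
      (\<forall>t\<in>{a..x}. (F has_vector_derivative (B t ** F t)) (at t within {a..x})) \<and>
      F x = M)"

definition C1_on_rect :: "(real \<times> real \<Rightarrow> 'a::real_normed_vector) \<Rightarrow> (real \<times> real) set \<Rightarrow> bool" where
  "C1_on_rect f S \<longleftrightarrow> (\<exists>D1 D2. continuous_on S D1 \<and> continuous_on S D2 \<and>
      (\<forall>p\<in>S. (f has_derivative (\<lambda>(h,k). h *\<^sub>R D1 p + k *\<^sub>R D2 p)) (at p within S)))"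

end

theory Submission
  imports Defs "HOL-Analysis.Analysis"
begin
lemma matrix_sub_ldistrib: "(A::'a::ring_1^'n^'m) ** (B - C) = A ** B - A ** C"
  by (simp add: matrix_matrix_mult_def vec_eq_iff algebra_simps sum_subtractf)
lemma matrix_sub_rdistrib: "((B::'a::ring_1^'n^'m) - C) ** A = B ** A - C ** A"
  by (simp add: matrix_matrix_mult_def vec_eq_iff algebra_simps sum_subtractf)
lemma matrix_add_rdistrib': "((B::'a::semiring_1^'n^'m) + C) ** A = B ** A + C ** A"
  by (simp add: matrix_matrix_mult_def vec_eq_iff algebra_simps sum.distrib)
lemma matrix_neg_left: "(- (B::'a::ring_1^'n^'m)) ** A = - (B ** A)"
  by (simp add: matrix_matrix_mult_def vec_eq_iff sum_negf)
lemma matrix_neg_right: "(B::'a::ring_1^'n^'m) ** (- A) = - (B ** A)"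
  by (simp add: matrix_matrix_mult_def vec_eq_iff sum_negf)

lemma bb_mm: "bounded_bilinear (\<lambda>(A::'n::finite cmat) (B::'n cmat). A ** B)"
  unfolding bilinear_conv_bounded_bilinear[symmetric] bilinear_def
  by (auto intro!: linearI simp: matrix_add_ldistrib matrix_add_rdistrib' scalar_matrix_assoc matrix_scalar_ac)

lemma bb_mm_rev: "bounded_bilinear (\<lambda>(A::'n::finite cmat) (B::'n cmat). B ** A)"
  unfolding bilinear_conv_bounded_bilinear[symmetric] bilinear_def
  by (auto intro!: linearI simp: matrix_add_ldistrib matrix_add_rdistrib' scalar_matrix_assoc matrix_scalar_ac)

lemma mm_scaleR_right: "(A::'n::finite cmat) ** (k *\<^sub>R B) = k *\<^sub>R (A ** B)"
  by (simp add: matrix_scalar_ac scalar_matrix_assoc)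
lemma mm_scaleR_left: "(k *\<^sub>R (A::'n::finite cmat)) ** B = k *\<^sub>R (A ** B)"
  by (simp add: scalar_matrix_assoc)

primrec pic :: "('m \<Rightarrow> 'x \<Rightarrow> 'x::real_normed_vector) \<Rightarrow> (real \<Rightarrow> 'm) \<Rightarrow> real \<Rightarrow> 'x \<Rightarrow> nat \<Rightarrow> real \<Rightarrow> 'x" where
  "pic mul B a X0 0 = (\<lambda>s. X0)"
| "pic mul B a X0 (Suc k) = (\<lambda>s. integral {a..s} (\<lambda>u. mul (B u) (pic mul B a X0 k u)))"

lemma poly_integral:
  fixes a s c :: real
  assumes "a \<le> s"
  shows "((\<lambda>u. c * (u-a)^k / fact k) has_integral (c * (s-a)^(Suc k) / fact (Suc k))) {a..s}"
proof -
  have "((\<lambda>u. c * (u-a)^k / fact k) has_integral ((\<lambda>u. c * (u-a)^(Suc k) / fact (Suc k)) s - (\<lambda>u. c * (u-a)^(Suc k) / fact (Suc k)) a)) {a..s}"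
  proof (rule fundamental_theorem_of_calculus[OF assms])
    fix x assume "x \<in> {a..s}"
    have "((\<lambda>u. c * (u-a)^(Suc k) / fact (Suc k)) has_real_derivative (c * (real (Suc k) * (x-a)^k) / fact (Suc k))) (at x within {a..s})"
      by (rule derivative_eq_intros refl | simp)+
    moreover have "c * (real (Suc k) * (x-a)^k) / fact (Suc k) = c * (x-a)^k / fact k"
      by (simp add: field_simps del: of_nat_Suc)
    ultimately show "((\<lambda>u. c * (u-a)^(Suc k) / fact (Suc k)) has_vector_derivative c * (x-a)^k / fact k) (at x within {a..s})"
      by (simp add: has_real_derivative_iff_has_vector_derivative)
  qed
  then show ?thesis by simp
qed

lemma pic_props:
  fixes mul :: "'m::euclidean_space \<Rightarrow> 'x::euclidean_space \<Rightarrow> 'x" and B :: "real \<Rightarrow> 'm"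
  assumes bb: "bounded_bilinear mul" and Kb: "\<And>x y. norm (mul x y) \<le> norm x * norm y * K" and K: "K > 0"
    and cB: "continuous_on {a..b} B" and MB: "\<And>u. u\<in>{a..b} \<Longrightarrow> norm (B u) \<le> M"
  shows "continuous_on {a..b} (pic mul B a X0 k) \<and>
     (\<forall>s\<in>{a..b}. norm (pic mul B a X0 k s) \<le> norm X0 * (K*M)^k * (s-a)^k / fact k)"
proof (induction k)
  case 0
  then show ?case by auto
next
  case (Suc k)
  let ?p = "pic mul B a X0 k"
  have cg: "continuous_on {a..b} (\<lambda>u. mul (B u) (?p u))"
    using Suc.IH cB by (intro bounded_bilinear.continuous_on[OF bb]) auto
  have c1: "continuous_on {a..b} (pic mul B a X0 (Suc k))"
    unfolding continuous_on_eq_continuous_within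
    using integral_has_vector_derivative[OF cg] has_vector_derivative_continuous by fastforce
  have b1: "norm (pic mul B a X0 (Suc k) s) \<le> norm X0 * (K*M)^(Suc k) * (s-a)^(Suc k) / fact (Suc k)"
    if s: "s \<in> {a..b}" for s
  proof -
    have sub: "{a..s} \<subseteq> {a..b}" using s by auto
    have "norm (integral {a..s} (\<lambda>u. mul (B u) (?p u))) \<le> integral {a..s} (\<lambda>u. (norm X0 * (K*M)^(Suc k)) * (u-a)^k / fact k)"
    proof (rule integral_norm_bound_integral)
      show "(\<lambda>u. mul (B u) (?p u)) integrable_on {a..s}"
        by (rule integrable_continuous_real, rule continuous_on_subset[OF cg sub])
      show "(\<lambda>u. (norm X0 * (K*M)^(Suc k)) * (u-a)^k / fact k) integrable_on {a..s}"
        using has_integral_integrable[OF poly_integral[of a s "norm X0 * (K*M)^(Suc k)" k]] s by auto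
      fix u assume u: "u \<in> {a..s}"
      then have ub: "u \<in> {a..b}" using sub by auto
      have "norm (mul (B u) (?p u)) \<le> norm (B u) * norm (?p u) * K" by (rule Kb)
      also have "\<dots> \<le> M * (norm X0 * (K*M)^k * (u-a)^k / fact k) * K"
        using Suc.IH ub MB[OF ub] K order_trans[OF norm_ge_zero MB[OF ub]]
        by (intro mult_right_mono mult_mono) auto
      also have "\<dots> = (norm X0 * (K*M)^(Suc k)) * (u-a)^k / fact k"
        by (simp add: field_simps)
      finally show "norm (mul (B u) (?p u)) \<le> (norm X0 * (K*M)^(Suc k)) * (u-a)^k / fact k" .
    qed
    also have "\<dots> = norm X0 * (K*M)^(Suc k) * (s-a)^(Suc k) / fact (Suc k)"
      by (rule integral_unique[OF poly_integral]) (use s in auto)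
    finally show ?thesis by simp
  qed
  show ?case using c1 b1 by blast
qed

lemma ode_exists:
  fixes mul :: "'m::euclidean_space \<Rightarrow> 'x::euclidean_space \<Rightarrow> 'x" and B :: "real \<Rightarrow> 'm"
  assumes bb: "bounded_bilinear mul" and Kb: "\<And>x y. norm (mul x y) \<le> norm x * norm y * K" and K: "K > 0"
    and ab: "a \<le> b" and cB: "continuous_on {a..b} B" and MB: "\<And>u. u\<in>{a..b} \<Longrightarrow> norm (B u) \<le> M"
  shows "\<exists>F. F a = X0 \<and> (\<forall>t\<in>{a..b}. (F has_vector_derivative mul (B t) (F t)) (at t within {a..b}))
     \<and> (\<forall>t\<in>{a..b}. norm (F t) \<le> norm X0 * exp (K*M*(b-a)))"
proof -
  have M0: "0 \<le> M" using MB[of a] ab order_trans[OF norm_ge_zero] by auto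
  define p where "p = pic mul B a X0"
  define F where "F s = (\<Sum>i. p i s)" for s
  define x where "x = K*M*(b-a)"
  define Mb where "Mb i = norm X0 * (x^i /\<^sub>R fact i)" for i
  have x0: "x \<ge> 0" using K M0 ab by (simp add: x_def)
  have pc: "continuous_on {a..b} (p i)" for i
    using pic_props[OF bb Kb K cB MB] by (simp add: p_def)
  have pb: "norm (p i s) \<le> Mb i" if s: "s\<in>{a..b}" for i s
  proof -
    have "norm (p i s) \<le> norm X0 * (K*M)^i * (s-a)^i / fact i"
      using pic_props[OF bb Kb K cB MB] s by (simp add: p_def)
    also have "\<dots> = norm X0 * (K*M*(s-a))^i / fact i" by (simp add: power_mult_distrib)
    also have "\<dots> \<le> norm X0 * x^i / fact i"
      unfolding x_def using s K M0
      by (intro divide_right_mono mult_left_mono power_mono) auto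
    finally show ?thesis by (simp add: Mb_def divide_inverse mult_ac)
  qed
  have Mbs: "Mb sums (norm X0 * exp x)"
    unfolding Mb_def by (intro sums_mult exp_converges)
  have ul: "uniform_limit {a..b} (\<lambda>n s. \<Sum>i<n. p i s) F sequentially"
    unfolding F_def using pb Mbs by (intro Weierstrass_m_test) (auto simp: sums_summable)
  have cF: "continuous_on {a..b} F"
    by (rule uniform_limit_theorem[OF _ ul]) (auto intro!: always_eventually continuous_on_sum pc)
  have cg: "continuous_on {a..b} (\<lambda>u. mul (B u) (F u))"
    using cF cB by (intro bounded_bilinear.continuous_on[OF bb])
  have eq: "F s = X0 + integral {a..s} (\<lambda>u. mul (B u) (F u))" if s: "s \<in> {a..b}" for s
  proof -
    have sub: "{a..s} \<subseteq> {a..b}" using s by auto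
    define S where "S n u = (\<Sum>i<n. p i u)" for n u
    have Sc: "continuous_on {a..b} (\<lambda>u. mul (B u) (S n u))" for n
      unfolding S_def using cB pc by (intro bounded_bilinear.continuous_on[OF bb] continuous_on_sum) auto
    have rec: "S (Suc n) s = X0 + integral {a..s} (\<lambda>u. mul (B u) (S n u))" for n
    proof -
      have "S (Suc n) s = p 0 s + (\<Sum>i<n. p (Suc i) s)"
        unfolding S_def by (rule sum.lessThan_Suc_shift)
      also have "(\<Sum>i<n. p (Suc i) s) = (\<Sum>i<n. integral {a..s} (\<lambda>u. mul (B u) (p i u)))"
        by (simp add: p_def)
      also have "\<dots> = integral {a..s} (\<lambda>u. \<Sum>i<n. mul (B u) (p i u))"
        by (rule integral_sum[symmetric]) (auto intro!: integrable_continuous_real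
             continuous_on_subset[OF _ sub] bounded_bilinear.continuous_on[OF bb] cB pc)
      also have "\<dots> = integral {a..s} (\<lambda>u. mul (B u) (S n u))"
        unfolding S_def by (simp add: bounded_bilinear.sum_right[OF bb])
      finally show ?thesis by (simp add: p_def)
    qed
    have l1: "(\<lambda>n. S (Suc n) s) \<longlonglongrightarrow> F s"
      using tendsto_uniform_limitI[OF ul s] unfolding S_def by (rule LIMSEQ_Suc)
    have bB: "bounded (B ` {a..s})"
      using compact_imp_bounded[OF compact_continuous_image[OF continuous_on_subset[OF cB sub]]] by simp
    have bF: "bounded (F ` {a..s})"
      using compact_imp_bounded[OF compact_continuous_image[OF continuous_on_subset[OF cF sub]]] by simp
    have ul2: "uniform_limit {a..s} (\<lambda>n u. mul (B u) (S n u)) (\<lambda>u. mul (B u) (F u)) sequentially"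
      unfolding S_def by (rule bounded_bilinear.bounded_uniform_limit[OF bb uniform_limit_const
            uniform_limit_on_subset[OF ul sub] bF bB])
    obtain I J where IJ: "\<And>n. ((\<lambda>u. mul (B u) (S n u)) has_integral I n) {a..s}"
      "((\<lambda>u. mul (B u) (F u)) has_integral J) {a..s}" "I \<longlonglongrightarrow> J"
      using uniform_limit_integral[OF ul2 continuous_on_subset[OF Sc sub]] by auto
    have "(\<lambda>n. S (Suc n) s) \<longlonglongrightarrow> X0 + J"
    proof -
      have "(\<lambda>n. integral {a..s} (\<lambda>u. mul (B u) (S n u))) = I"
        using IJ(1) integral_unique by blast
      then show ?thesis unfolding rec using IJ(3) by (auto intro!: tendsto_add)
    qed
    then have "F s = X0 + J" using l1 LIMSEQ_unique by blast
    then show ?thesis using IJ(2) by (simp add: integral_unique)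
  qed
  show ?thesis
  proof (intro exI conjI ballI)
    show "F a = X0" using eq[of a] ab by simp
    fix t assume t: "t \<in> {a..b}"
    have "((\<lambda>u. X0 + integral {a..u} (\<lambda>u. mul (B u) (F u))) has_vector_derivative mul (B t) (F t)) (at t within {a..b})"
      using integral_has_vector_derivative[OF cg t] by (auto intro!: derivative_eq_intros)
    then show "(F has_vector_derivative mul (B t) (F t)) (at t within {a..b})"
      by (rule has_vector_derivative_transform[OF t eq, rotated])
    have "norm (F t) \<le> suminf Mb"
      unfolding F_def using pb[OF t] Mbs by (intro norm_suminf_le) (auto simp: sums_summable)
    also have "\<dots> = norm X0 * exp (K*M*(b-a))" using Mbs by (simp add: sums_iff x_def)
    finally show "norm (F t) \<le> norm X0 * exp (K*M*(b-a))" .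
  qed
qed

lemma mm_deriv:
  fixes f g :: "real \<Rightarrow> 'n::finite cmat"
  assumes "(f has_vector_derivative f') (at x within s)" "(g has_vector_derivative g') (at x within s)"
  shows "((\<lambda>x. f x ** g x) has_vector_derivative (f x ** g' + f' ** g x)) (at x within s)"
  using bounded_bilinear.has_vector_derivative[OF bb_mm assms] by simp

lemma hib_real:
  fixes f :: "real \<Rightarrow> 'a::real_normed_vector"
  assumes "0 \<le> B" "(f has_integral i) {a..s}" "\<And>x. x\<in>{a..s} \<Longrightarrow> norm (f x) \<le> B" "a \<le> s"
  shows "norm i \<le> B * (s - a)"
  using has_integral_bound[of B f i a s] assms by simp

lemma inv_left_right:
  fixes A :: "'n::finite cmat"
  assumes "B ** A = mat 1"
  shows "A ** B = mat 1" "invertible A" "matrix_inv A = B"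
proof -
  show AB: "A ** B = mat 1" using assms matrix_left_right_inverse by blast
  show inv: "invertible A" using assms AB invertible_def by blast
  have "A ** matrix_inv A = mat 1 \<and> matrix_inv A ** A = mat 1"
    unfolding matrix_inv_def by (rule someI_ex) (use inv in \<open>simp add: invertible_def\<close>)
  then have "matrix_inv A = (B ** A) ** matrix_inv A" by (simp add: assms)
  also have "\<dots> = B ** (A ** matrix_inv A)" by (simp add: matrix_mul_assoc)
  also have "\<dots> = B" using \<open>A ** matrix_inv A = mat 1 \<and> _\<close> by simp
  finally show "matrix_inv A = B" .
qed

lemma inv_props:
  fixes A :: "'n::finite cmat"
  assumes "invertible A"
  shows "A ** matrix_inv A = mat 1" "matrix_inv A ** A = mat 1"
proof -
  have "A ** matrix_inv A = mat 1 \<and> matrix_inv A ** A = mat 1"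
    unfolding matrix_inv_def by (rule someI_ex) (use assms in \<open>simp add: invertible_def\<close>)
  then show "A ** matrix_inv A = mat 1" "matrix_inv A ** A = mat 1" by auto
qed

lemma inv_mult:
  fixes A B :: "'n::finite cmat"
  assumes "invertible A" "invertible B"
  shows "matrix_inv (A ** B) = matrix_inv B ** matrix_inv A"
proof (rule inv_left_right(3))
  have "matrix_inv B ** matrix_inv A ** (A ** B) = matrix_inv B ** (matrix_inv A ** A) ** B"
    by (simp add: matrix_mul_assoc)
  then show "matrix_inv B ** matrix_inv A ** (A ** B) = mat 1"
    using inv_props[OF assms(1)] inv_props[OF assms(2)] by simp
qed

definition sol :: "(real \<Rightarrow> 'n::finite cmat) \<Rightarrow> real \<Rightarrow> real \<Rightarrow> (real \<Rightarrow> 'n cmat) \<Rightarrow> bool" where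
  "sol B a x F \<longleftrightarrow> (\<forall>t\<in>{a..x}. (F has_vector_derivative (B t ** F t)) (at t within {a..x}))"

definition adj :: "(real \<Rightarrow> 'n::finite cmat) \<Rightarrow> real \<Rightarrow> real \<Rightarrow> (real \<Rightarrow> 'n cmat) \<Rightarrow> bool" where
  "adj B a x G \<longleftrightarrow> (\<forall>t\<in>{a..x}. (G has_vector_derivative (- (G t ** B t))) (at t within {a..x}))"

lemma sol_sub: "sol B a b F \<Longrightarrow> s \<le> b \<Longrightarrow> sol B a s F"
  unfolding sol_def
proof safe
  fix t assume h: "\<forall>t\<in>{a..b}. (F has_vector_derivative B t ** F t) (at t within {a..b})" "s \<le> b" "t \<in> {a..s}"
  then have "t \<in> {a..b}" by auto
  from has_vector_derivative_within_subset[OF bspec[OF h(1) this], of "{a..s}"] h(2)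
  show "(F has_vector_derivative B t ** F t) (at t within {a..s})" by auto
qed
lemma adj_sub: "adj B a b F \<Longrightarrow> s \<le> b \<Longrightarrow> adj B a s F"
  unfolding adj_def
proof safe
  fix t assume h: "\<forall>t\<in>{a..b}. (F has_vector_derivative - (F t ** B t)) (at t within {a..b})" "s \<le> b" "t \<in> {a..s}"
  then have "t \<in> {a..b}" by auto
  from has_vector_derivative_within_subset[OF bspec[OF h(1) this], of "{a..s}"] h(2)
  show "(F has_vector_derivative - (F t ** B t)) (at t within {a..s})" by auto
qed

lemma zero_deriv_const:
  fixes H :: "real \<Rightarrow> 'a::real_normed_vector"
  assumes "a \<le> x" "\<And>t. t\<in>{a..x} \<Longrightarrow> (H has_vector_derivative 0) (at t within {a..x})"
  shows "H x = H a"
proof -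
  obtain c where "\<And>t. t \<in> {a..x} \<Longrightarrow> H t = c"
    using has_vector_derivative_zero_constant[of "{a..x}" H] assms by auto
  then show ?thesis using assms(1) by auto
qed

lemma adj_sol_const:
  assumes "a \<le> x" "sol B a x F" "adj B a x G"
  shows "G x ** F x = G a ** F a"
proof -
  have "((\<lambda>t. G t ** F t) has_vector_derivative 0) (at t within {a..x})" if t: "t\<in>{a..x}" for t
  proof -
    have "((\<lambda>t. G t ** F t) has_vector_derivative (G t ** (B t ** F t) + (- (G t ** B t)) ** F t)) (at t within {a..x})"
      using assms(2,3) t unfolding sol_def adj_def by (intro mm_deriv) auto
    moreover have "G t ** (B t ** F t) + (- (G t ** B t)) ** F t = 0"
      by (simp add: matrix_neg_left matrix_mul_assoc)
    ultimately show ?thesis by simp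
  qed
  then show ?thesis using zero_deriv_const[OF assms(1)] by blast
qed

lemma prodint_unique:
  assumes ax: "a \<le> x" and F: "F a = mat 1" "sol B a x F" and G: "G a = mat 1" "adj B a x G"
  shows "prodint B a x = F x"
  unfolding prodint_def
proof (rule the_equality)
  show "\<exists>F'. F' a = mat 1 \<and> (\<forall>t\<in>{a..x}. (F' has_vector_derivative B t ** F' t) (at t within {a..x})) \<and> F' x = F x"
    using F unfolding sol_def by blast
  fix M assume "\<exists>F'. F' a = mat 1 \<and> (\<forall>t\<in>{a..x}. (F' has_vector_derivative B t ** F' t) (at t within {a..x})) \<and> F' x = M"
  then obtain F' where F': "F' a = mat 1" "sol B a x F'" "F' x = M" unfolding sol_def by blast
  have 1: "G x ** F' x = mat 1" using adj_sol_const[OF ax F'(2) G(2)] F'(1) G(1) by simp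
  have 2: "G x ** F x = mat 1" using adj_sol_const[OF ax F(2) G(2)] F(1) G(1) by simp
  have "F' x = matrix_inv (G x)" using inv_left_right(3)[OF 1[unfolded matrix_left_right_inverse]] by simp
  moreover have "F x = matrix_inv (G x)" using inv_left_right(3)[OF 2[unfolded matrix_left_right_inverse]] by simp
  ultimately show "M = F x" using F' by simp
qed

lemma prodint_refl: "prodint B a a = mat 1"
  unfolding prodint_def
proof (rule the_equality)
  show "\<exists>F. F a = mat 1 \<and> (\<forall>t\<in>{a..a}. (F has_vector_derivative B t ** F t) (at t within {a..a})) \<and> F a = mat 1"
    by (rule exI[of _ "\<lambda>_. mat 1"]) (simp add: has_vector_derivative_def has_derivative_within_singleton_iff bounded_linear_scaleR_left)
qed auto

lemma mm_bound: "\<exists>K>0. \<forall>(x::'n::finite cmat) (y::'n cmat). norm (x ** y) \<le> norm x * norm y * K"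
proof -
  have "\<exists>K>0. \<forall>(x::'n cmat) (y::'n cmat). norm ((\<lambda>A B. A ** B) x y) \<le> norm x * norm y * K"
    by (rule bounded_bilinear.pos_bounded[OF bb_mm])
  then show ?thesis by simp
qed

lemma sol_exists:
  fixes B :: "real \<Rightarrow> 'n::finite cmat"
  assumes K: "K > 0" "\<And>(x::'n cmat) (y::'n cmat). norm (x ** y) \<le> norm x * norm y * K"
    and ab: "a \<le> b" and cB: "continuous_on {a..b} B" and MB: "\<And>u. u\<in>{a..b} \<Longrightarrow> norm (B u) \<le> M"
  shows "\<exists>F G. F a = mat 1 \<and> G a = mat 1 \<and> sol B a b F \<and> adj B a b G \<and>
     (\<forall>t\<in>{a..b}. G t ** F t = mat 1 \<and> F t ** G t = mat 1 \<and>
        norm (F t) \<le> norm (mat 1::'n cmat) * exp (K*M*(b-a)) \<and> norm (G t) \<le> norm (mat 1::'n cmat) * exp (K*M*(b-a)))"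
proof -
  obtain F where F: "F a = mat 1" "\<forall>t\<in>{a..b}. (F has_vector_derivative B t ** F t) (at t within {a..b})"
    "\<forall>t\<in>{a..b}. norm (F t) \<le> norm (mat 1::'n cmat) * exp (K*M*(b-a))"
    using ode_exists[OF bb_mm K(2) K(1) ab cB MB, of "mat 1"] by auto
  have K2: "norm (y ** x) \<le> norm x * norm y * K" for x y :: "'n cmat" using K(2)[of y x] by (simp add: mult_ac)
  have cB': "continuous_on {a..b} (\<lambda>t. - B t)" using cB by (intro continuous_intros)
  obtain G where G: "G a = mat 1" "\<forall>t\<in>{a..b}. (G has_vector_derivative G t ** (- B t)) (at t within {a..b})"
    "\<forall>t\<in>{a..b}. norm (G t) \<le> norm (mat 1::'n cmat) * exp (K*M*(b-a))"
    using ode_exists[OF bb_mm_rev K2 K(1) ab cB', of M "mat 1"] MB by auto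
  have s: "sol B a b F" using F(2) by (simp add: sol_def)
  have g: "adj B a b G" using G(2) by (simp add: adj_def matrix_neg_right)
  have "G t ** F t = mat 1" if "t \<in> {a..b}" for t
    using adj_sol_const[OF _ sol_sub[OF s] adj_sub[OF g], of t] that F(1) G(1) by simp
  then show ?thesis using F G s g matrix_left_right_inverse by blast
qed

lemma norm3:
  assumes "\<forall>(x::'n::finite cmat) (y::'n cmat). norm (x ** y) \<le> norm x * norm y * K" "K > 0"
  shows "norm ((A::'n cmat) ** (B::'n cmat) ** (C::'n cmat)) \<le> norm A * norm B * norm C * K * K"
proof -
  have "norm (A ** B ** C) \<le> norm (A ** B) * norm C * K" by (rule assms(1)[rule_format])
  also have "\<dots> \<le> (norm A * norm B * K) * norm C * K"
    using assms(1)[rule_format, of A B] assms(2) by (intro mult_right_mono) auto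
  finally show ?thesis by (simp add: mult_ac)
qed

lemma ev_in: "t' \<in> S \<Longrightarrow> eventually (\<lambda>u. u \<in> S) (at t' within S)"
  by (simp add: eventually_at_filter)

lemma inv_deriv:
  fixes X Y :: "real \<Rightarrow> 'n::finite cmat"
  assumes X: "(X has_vector_derivative X') (at t within S)" and t: "t \<in> S"
    and YX: "\<And>u. u\<in>S \<Longrightarrow> Y u ** X u = mat 1" and Yb: "\<And>u. u\<in>S \<Longrightarrow> norm (Y u) \<le> C"
  shows "(Y has_vector_derivative - (Y t ** X' ** Y t)) (at t within S)"
proof -
  obtain K where K: "K > 0" "\<forall>(x::'n cmat) (y::'n cmat). norm (x ** y) \<le> norm x * norm y * K"
    using mm_bound by blast
  have XY: "X u ** Y u = mat 1" if "u \<in> S" for u using YX[OF that] matrix_left_right_inverse by blast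
  have C0: "0 \<le> C" using Yb[OF t] norm_ge_zero order_trans by blast
  have idY: "Y u - Y t = - (Y u ** (X u - X t) ** Y t)" if u: "u \<in> S" for u
  proof -
    have "Y u ** (X u - X t) ** Y t = (Y u ** X u) ** Y t - Y u ** (X t ** Y t)"
      by (simp add: matrix_sub_ldistrib matrix_sub_rdistrib matrix_mul_assoc)
    then show ?thesis using YX[OF u] XY[OF t] by simp
  qed
  have cX: "((\<lambda>u. X u - X t) \<longlongrightarrow> 0) (at t within S)"
    using has_vector_derivative_continuous[OF X] by (simp add: continuous_within tendsto_diff[where b="X t", of _ "X t", simplified] LIM_zero)
  have cY: "((\<lambda>u. Y u - Y t) \<longlongrightarrow> 0) (at t within S)"
  proof (rule tendsto_0_le[OF cX])
    show "\<forall>\<^sub>F u in at t within S. norm (Y u - Y t) \<le> norm (X u - X t) * (C * norm (Y t) * K * K)"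
      using ev_in[OF t]
    proof eventually_elim
      case (elim u)
      have "norm (Y u - Y t) = norm (Y u ** (X u - X t) ** Y t)" using idY[OF elim] by simp
      also have "\<dots> \<le> norm (Y u) * norm (X u - X t) * norm (Y t) * K * K" by (rule norm3[OF K(2,1)])
      also have "\<dots> \<le> C * norm (X u - X t) * norm (Y t) * K * K"
        using Yb[OF elim] K by (intro mult_right_mono) auto
      finally show ?case by (simp add: mult_ac)
    qed
  qed
  have Xd: "\<forall>e>0. \<forall>\<^sub>F u in at t within S. norm (X u - X t - (u - t) *\<^sub>R X') \<le> e * norm (u - t)"
    using X unfolding has_vector_derivative_def has_derivative_within_alt2 by blast
  have "\<forall>e>0. \<forall>\<^sub>F u in at t within S. norm (Y u - Y t - (u - t) *\<^sub>R (- (Y t ** X' ** Y t))) \<le> e * norm (u - t)"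
  proof (intro allI impI)
    fix e :: real assume e: "e > 0"
    define c1 where "c1 = (C + 1) * (norm (Y t) + 1) * K * K"
    define c2 where "c2 = (norm X' + 1) * (norm (Y t) + 1) * K * K"
    have p1: "norm (Y t) + 1 > 0" "norm X' + 1 > 0" "C + 1 > 0" using C0 by (auto intro: add_nonneg_pos)
    have c1: "c1 > 0" unfolding c1_def using p1 K by (intro mult_pos_pos) auto
    have c2: "c2 > 0" unfolding c2_def using p1 K by (intro mult_pos_pos) auto
    have ev1: "\<forall>\<^sub>F u in at t within S. norm (X u - X t - (u - t) *\<^sub>R X') \<le> (e/2/c1) * norm (u - t)"
    proof -
      have "e/2/c1 > 0" using e c1 by simp
      then show ?thesis using Xd by blast
    qed
    have ev2: "\<forall>\<^sub>F u in at t within S. norm (Y u - Y t) < e/2/c2"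
      using cY[unfolded tendsto_iff] e c2 by (auto simp: dist_norm)
    show "\<forall>\<^sub>F u in at t within S. norm (Y u - Y t - (u - t) *\<^sub>R (- (Y t ** X' ** Y t))) \<le> e * norm (u - t)"
      using ev1 ev2 ev_in[OF t]
    proof eventually_elim
      case (elim u)
      let ?D = "X u - X t - (u - t) *\<^sub>R X'"
      have eq: "Y u - Y t - (u - t) *\<^sub>R (- (Y t ** X' ** Y t)) =
         - (Y u ** ?D ** Y t) - (u - t) *\<^sub>R ((Y u - Y t) ** X' ** Y t)"
      proof -
        have e2: "Y u ** ?D ** Y t = Y u ** (X u - X t) ** Y t - (u - t) *\<^sub>R (Y u ** X' ** Y t)"
          by (simp add: matrix_sub_ldistrib matrix_sub_rdistrib mm_scaleR_right mm_scaleR_left)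
        have e3: "(Y u - Y t) ** X' ** Y t = Y u ** X' ** Y t - Y t ** X' ** Y t"
          by (simp add: matrix_sub_rdistrib)
        have e1: "Y u - Y t = - (Y u ** (X u - X t) ** Y t)" by (rule idY[OF elim(3)])
        show ?thesis
          apply (subst e2, subst e3, subst e1)
          by (simp add: algebra_simps)
      qed
      have n1: "norm (Y u ** ?D ** Y t) \<le> C * ((e/2/c1) * norm (u - t)) * (norm (Y t) + 1) * K * K"
      proof -
        have "norm (Y u ** ?D ** Y t) \<le> norm (Y u) * norm ?D * norm (Y t) * K * K" by (rule norm3[OF K(2,1)])
        also have "\<dots> \<le> C * ((e/2/c1) * norm (u - t)) * (norm (Y t) + 1) * K * K"
          using Yb[OF elim(3)] elim(1) K C0 e c1 by (intro mult_right_mono mult_mono) auto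
        finally show ?thesis .
      qed
      have "C * ((e/2/c1) * norm (u - t)) * (norm (Y t) + 1) * K * K \<le> (e/2) * norm (u - t)"
      proof -
        have "C * ((e/2/c1) * norm (u - t)) * (norm (Y t) + 1) * K * K = (e/2) * norm (u-t) * (C * (norm (Y t) + 1) * K * K / c1)"
          by (simp add: field_simps)
        also have "\<dots> \<le> (e/2) * norm (u-t) * 1"
          using c1 e K C0 unfolding c1_def
          by (intro mult_left_mono) (auto simp: field_simps intro!: mult_right_mono)
        finally show ?thesis by simp
      qed
      with n1 have n1': "norm (Y u ** ?D ** Y t) \<le> (e/2) * norm (u - t)" by linarith
      have n2: "norm ((u - t) *\<^sub>R ((Y u - Y t) ** X' ** Y t)) \<le> (e/2) * norm (u - t)"
      proof -
        have "norm ((Y u - Y t) ** X' ** Y t) \<le> norm (Y u - Y t) * norm X' * norm (Y t) * K * K" by (rule norm3[OF K(2,1)])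
        also have "\<dots> \<le> (e/2/c2) * (norm X' + 1) * (norm (Y t) + 1) * K * K"
          using elim(2) K e c2 p1 by (intro mult_right_mono mult_mono) auto
        also have "\<dots> = e/2" using c2 unfolding c2_def by (simp add: field_simps)
        finally have "norm ((Y u - Y t) ** X' ** Y t) \<le> e/2" .
        from mult_left_mono[OF this abs_ge_zero[of "u-t"]] show ?thesis by (simp add: mult_ac)
      qed
      have "norm (Y u - Y t - (u - t) *\<^sub>R (- (Y t ** X' ** Y t))) \<le> norm (Y u ** ?D ** Y t) + norm ((u - t) *\<^sub>R ((Y u - Y t) ** X' ** Y t))"
        unfolding eq by (rule order_trans[OF norm_triangle_ineq4]) simp
      then show ?case using n1' n2 by linarith
    qed
  qed
  then show ?thesis unfolding has_vector_derivative_def has_derivative_within_alt2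
    using bounded_linear_scaleR_left[of "- (Y t ** X' ** Y t)"] by blast
qed

lemma dist_pair_same: "dist (u::real, t') (u, t) = dist t' t"
  by (simp add: dist_Pair_Pair)

lemma unif_t:
  fixes B :: "real \<times> real \<Rightarrow> 'a::metric_space"
  assumes "continuous_on ({a..b}\<times>{c..d}) B" "e > 0"
  shows "\<exists>\<delta>>0. \<forall>u\<in>{a..b}. \<forall>t\<in>{c..d}. \<forall>t'\<in>{c..d}. \<bar>t' - t\<bar> < \<delta> \<longrightarrow> dist (B (u,t')) (B (u,t)) < e"
proof -
  have "uniformly_continuous_on ({a..b}\<times>{c..d}) B"
    by (rule compact_uniformly_continuous[OF assms(1)]) (intro compact_Times compact_Icc)
  then obtain \<delta> where "\<delta> > 0" "\<forall>x\<in>{a..b}\<times>{c..d}. \<forall>x'\<in>{a..b}\<times>{c..d}. dist x' x < \<delta> \<longrightarrow> dist (B x') (B x) < e"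
    unfolding uniformly_continuous_on_def using assms(2) by metis
  then show ?thesis by (intro exI[of _ \<delta>]) (auto simp: dist_pair_same dist_real_def)
qed

lemma bound_on_rect:
  fixes B :: "real \<times> real \<Rightarrow> 'a::real_normed_vector"
  assumes "continuous_on ({a..b}\<times>{c..d}) B"
  shows "\<exists>M\<ge>0. \<forall>x\<in>{a..b}\<times>{c..d}. norm (B x) \<le> M"
proof -
  have "bounded (B ` ({a..b}\<times>{c..d}))"
    by (intro compact_imp_bounded compact_continuous_image assms compact_Times compact_Icc)
  then obtain M where "\<forall>x\<in>{a..b}\<times>{c..d}. norm (B x) \<le> M" unfolding bounded_iff by auto
  then show ?thesis by (intro exI[of _ "max M 0"]) force
qed

lemma sol_cont: "sol B a b F \<Longrightarrow> continuous_on {a..b} F"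
  unfolding sol_def continuous_on_eq_continuous_within using has_vector_derivative_continuous by blast
lemma adj_cont: "adj B a b F \<Longrightarrow> continuous_on {a..b} F"
  unfolding adj_def continuous_on_eq_continuous_within using has_vector_derivative_continuous by blast

lemma slice_cont:
  assumes "continuous_on ({a..b}\<times>{c..d}) B" "t \<in> {c..d}"
  shows "continuous_on {a..b} (\<lambda>u. B (u, t))"
  by (rule continuous_on_compose2[OF assms(1)]) (use assms(2) in \<open>auto intro!: continuous_intros\<close>)

lemma param_identity:
  fixes B :: "real \<times> real \<Rightarrow> 'n::finite cmat" and F G :: "real \<Rightarrow> real \<Rightarrow> 'n cmat"
  assumes F: "F a t' = mat 1" "sol (\<lambda>s. B(s,t')) a b (\<lambda>s. F s t')"
    and G: "G a t = mat 1" "adj (\<lambda>s. B(s,t)) a b (\<lambda>s. G s t)"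
    and s: "s \<in> {a..b}"
  shows "((\<lambda>u. G u t ** (B(u,t') - B(u,t)) ** F u t') has_integral (G s t ** F s t' - mat 1)) {a..s}"
proof -
  have as: "a \<le> s" using s by auto
  have Fs: "sol (\<lambda>s. B(s,t')) a s (\<lambda>s. F s t')" using sol_sub[OF F(2)] s by auto
  have Gs: "adj (\<lambda>s. B(s,t)) a s (\<lambda>s. G s t)" using adj_sub[OF G(2)] s by auto
  have "((\<lambda>u. G u t ** (B(u,t') - B(u,t)) ** F u t') has_integral ((\<lambda>u. G u t ** F u t') s - (\<lambda>u. G u t ** F u t') a)) {a..s}"
  proof (rule fundamental_theorem_of_calculus[OF as])
    fix x assume x: "x \<in> {a..s}"
    have "((\<lambda>u. G u t ** F u t') has_vector_derivative (G x t ** (B(x,t') ** F x t') + (- (G x t ** B(x,t))) ** F x t')) (at x within {a..s})"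
      using Fs Gs x unfolding sol_def adj_def by (intro mm_deriv) auto
    moreover have "G x t ** (B(x,t') ** F x t') + (- (G x t ** B(x,t))) ** F x t' = G x t ** (B(x,t') - B(x,t)) ** F x t'"
      by (simp add: matrix_neg_left matrix_sub_ldistrib matrix_sub_rdistrib matrix_mul_assoc)
    ultimately show "((\<lambda>u. G u t ** F u t') has_vector_derivative G x t ** (B(x,t') - B(x,t)) ** F x t') (at x within {a..s})"
      by simp
  qed
  then show ?thesis using F(1) G(1) by simp
qed

lemma param_deriv:
  fixes B D :: "real \<times> real \<Rightarrow> 'n::finite cmat" and F G :: "real \<Rightarrow> real \<Rightarrow> 'n cmat"
  assumes ab: "a \<le> b"
    and cB: "continuous_on ({a..b}\<times>{c..d}) B" and cD: "continuous_on ({a..b}\<times>{c..d}) D"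
    and dB: "\<And>s t. s\<in>{a..b} \<Longrightarrow> t\<in>{c..d} \<Longrightarrow> ((\<lambda>t. B(s,t)) has_vector_derivative D(s,t)) (at t within {c..d})"
    and F: "\<And>t. t\<in>{c..d} \<Longrightarrow> F a t = mat 1 \<and> sol (\<lambda>s. B(s,t)) a b (\<lambda>s. F s t)"
    and G: "\<And>t. t\<in>{c..d} \<Longrightarrow> G a t = mat 1 \<and> adj (\<lambda>s. B(s,t)) a b (\<lambda>s. G s t)"
    and FG: "\<And>s t. s\<in>{a..b} \<Longrightarrow> t\<in>{c..d} \<Longrightarrow> F s t ** G s t = mat 1"
    and bnd: "\<And>s t. s\<in>{a..b} \<Longrightarrow> t\<in>{c..d} \<Longrightarrow> norm (F s t) \<le> C \<and> norm (G s t) \<le> C"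
    and s: "s\<in>{a..b}" and t: "t\<in>{c..d}"
  shows "\<exists>Y. ((\<lambda>t. F s t) has_vector_derivative Y) (at t within {c..d})"
proof -
  obtain K where K: "K > 0" "\<forall>(x::'n cmat) (y::'n cmat). norm (x ** y) \<le> norm x * norm y * K"
    using mm_bound by blast
  have Kb: "norm (x ** y) \<le> norm x * norm y * K" for x y :: "'n cmat" using K(2) by blast
  have C0: "0 \<le> C" using bnd[OF s t] norm_ge_zero order_trans by blast
  obtain MD where MD: "MD \<ge> 0" "\<And>x. x\<in>{a..b}\<times>{c..d} \<Longrightarrow> norm (D x) \<le> MD"
    using bound_on_rect[OF cD] by blast
  have ident: "F u t' - F u t = F u t ** (G u t ** F u t' - mat 1)" if "u\<in>{a..b}" for u t'
  proof -
    have "F u t ** (G u t ** F u t' - mat 1) = (F u t ** G u t) ** F u t' - F u t"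
      by (simp add: matrix_sub_ldistrib matrix_mul_assoc)
    then show ?thesis using FG[OF that t] by simp
  qed
  have integ: "((\<lambda>u. G u t ** (B(u,t') - B(u,t)) ** F u t') has_integral (G u' t ** F u' t' - mat 1)) {a..u'}"
    if "t'\<in>{c..d}" "u'\<in>{a..b}" for t' u'
    using param_identity[of F a t' B b G t u'] F[OF that(1)] G[OF t] that(2) by blast
  define L where "L = K * C * (C * C * K * K * (b - a))"
  have L0: "L \<ge> 0" unfolding L_def using K C0 ab by simp
  have UC: "\<exists>\<delta>>0. \<forall>t'\<in>{c..d}. \<bar>t' - t\<bar> < \<delta> \<longrightarrow> (\<forall>u\<in>{a..b}. norm (F u t' - F u t) \<le> \<epsilon>)"
    if \<epsilon>: "\<epsilon> > 0" for \<epsilon>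
  proof -
    define \<eta> where "\<eta> = \<epsilon> / (L + 1)"
    have \<eta>: "\<eta> > 0" using \<epsilon> L0 by (simp add: \<eta>_def)
    obtain \<delta> where \<delta>: "\<delta> > 0" "\<forall>u\<in>{a..b}. \<forall>t\<in>{c..d}. \<forall>t'\<in>{c..d}. \<bar>t' - t\<bar> < \<delta> \<longrightarrow> dist (B (u,t')) (B (u,t)) < \<eta>"
      using unif_t[OF cB \<eta>] by blast
    show ?thesis
    proof (intro exI[of _ \<delta>] conjI ballI impI \<delta>(1))
      fix t' u assume t': "t' \<in> {c..d}" "\<bar>t' - t\<bar> < \<delta>" and u: "u \<in> {a..b}"
      have "norm (G u t ** F u t' - mat 1) \<le> (C * \<eta> * C * K * K) * (u - a)"
      proof (rule hib_real[OF _ integ[OF t'(1) u]])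
        show "0 \<le> C * \<eta> * C * K * K" using C0 \<eta> K by simp
        show "a \<le> u" using u by simp
        fix x assume x: "x \<in> {a..u}"
        then have xb: "x \<in> {a..b}" using u by auto
        have "norm (G x t ** (B(x,t') - B(x,t)) ** F x t') \<le> norm (G x t) * norm (B(x,t') - B(x,t)) * norm (F x t') * K * K"
          by (rule norm3[OF K(2,1)])
        also have "\<dots> \<le> C * \<eta> * C * K * K"
          using bnd[OF xb t] bnd[OF xb t'(1)] \<delta>(2) xb t t' K C0 \<eta>
          by (intro mult_right_mono mult_mono) (auto simp: dist_norm less_imp_le)
        finally show "norm (G x t ** (B(x,t') - B(x,t)) ** F x t') \<le> C * \<eta> * C * K * K" .
      qed
      also have "\<dots> \<le> (C * \<eta> * C * K * K) * (b - a)"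
        using u C0 \<eta> K by (intro mult_left_mono) auto
      finally have Z: "norm (G u t ** F u t' - mat 1) \<le> (C * \<eta> * C * K * K) * (b - a)" .
      have "norm (F u t' - F u t) \<le> norm (F u t) * norm (G u t ** F u t' - mat 1) * K"
        unfolding ident[OF u] by (rule Kb)
      also have "\<dots> \<le> C * ((C * \<eta> * C * K * K) * (b - a)) * K"
        using bnd[OF u t] Z K C0 by (intro mult_right_mono mult_mono) auto
      also have "\<dots> = L * \<eta>" unfolding L_def by (simp add: mult_ac)
      also have "\<dots> \<le> \<epsilon>" unfolding \<eta>_def using L0 \<epsilon> by (simp add: field_simps)
      finally show "norm (F u t' - F u t) \<le> \<epsilon>" .
    qed
  qed
  have MV: "\<exists>\<delta>>0. \<forall>t'\<in>{c..d}. \<bar>t' - t\<bar> < \<delta> \<longrightarrow> (\<forall>u\<in>{a..b}. norm (B(u,t') - B(u,t) - (t' - t) *\<^sub>R D(u,t)) \<le> \<epsilon> * \<bar>t' - t\<bar>)"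
    if \<epsilon>: "\<epsilon> > 0" for \<epsilon>
  proof -
    obtain \<delta> where \<delta>: "\<delta> > 0" "\<forall>u\<in>{a..b}. \<forall>t\<in>{c..d}. \<forall>t'\<in>{c..d}. \<bar>t' - t\<bar> < \<delta> \<longrightarrow> dist (D (u,t')) (D (u,t)) < \<epsilon>"
      using unif_t[OF cD \<epsilon>] by blast
    show ?thesis
    proof (intro exI[of _ \<delta>] conjI ballI impI \<delta>(1))
      fix t' u assume t': "t' \<in> {c..d}" "\<bar>t' - t\<bar> < \<delta>" and u: "u \<in> {a..b}"
      define S where "S = {c..d} \<inter> ball t \<delta>"
      have cS: "convex S" unfolding S_def by (intro convex_Int convex_real_interval convex_ball)
      have tS: "t \<in> S" using t \<delta> by (simp add: S_def)
      have t'S: "t' \<in> S" using t' by (simp add: S_def dist_real_def abs_minus_commute)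
      have der: "((\<lambda>r. B(u,r) - r *\<^sub>R D(u,t)) has_derivative (\<lambda>k. k *\<^sub>R (D(u,r) - D(u,t)))) (at r within S)"
        if r: "r \<in> S" for r
      proof -
        have "((\<lambda>r. B(u,r)) has_vector_derivative D(u,r)) (at r within S)"
          using dB[OF u] r by (auto simp: S_def intro: has_vector_derivative_within_subset[of _ _ _ "{c..d}"])
        moreover have "((\<lambda>r. r *\<^sub>R D(u,t)) has_vector_derivative D(u,t)) (at r within S)"
          by (auto intro!: derivative_eq_intros)
        ultimately have "((\<lambda>r. B(u,r) - r *\<^sub>R D(u,t)) has_vector_derivative (D(u,r) - D(u,t))) (at r within S)"
          by (rule has_vector_derivative_diff)
        then show ?thesis by (simp add: has_vector_derivative_def)
      qed
      have ob: "onorm (\<lambda>k::real. k *\<^sub>R (D(u,r) - D(u,t))) \<le> \<epsilon>" if r: "r \<in> S" for r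
      proof -
        have "onorm (\<lambda>k::real. k *\<^sub>R (D(u,r) - D(u,t))) = onorm (\<lambda>k::real. k) * norm (D(u,r) - D(u,t))"
          by (rule onorm_scaleR_left[OF bounded_linear_ident])
        also have "\<dots> = norm (D(u,r) - D(u,t))" by (simp add: onorm_id)
        also have "\<dots> \<le> \<epsilon>" using \<delta>(2) u t r by (auto simp: S_def dist_norm dist_real_def abs_minus_commute less_imp_le)
        finally show ?thesis .
      qed
      have "norm ((B(u,t') - t' *\<^sub>R D(u,t)) - (B(u,t) - t *\<^sub>R D(u,t))) \<le> \<epsilon> * norm (t' - t)"
        by (rule differentiable_bound[OF cS der ob t'S tS])
      moreover have "(B(u,t') - t' *\<^sub>R D(u,t)) - (B(u,t) - t *\<^sub>R D(u,t)) = B(u,t') - B(u,t) - (t' - t) *\<^sub>R D(u,t)"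
        by (simp add: algebra_simps)
      ultimately show "norm (B(u,t') - B(u,t) - (t' - t) *\<^sub>R D(u,t)) \<le> \<epsilon> * \<bar>t' - t\<bar>" by simp
    qed
  qed
  have sb: "{a..s} \<subseteq> {a..b}" using s by auto
  have cJ: "continuous_on {a..b} (\<lambda>u. G u t ** D(u,t) ** F u t)"
    using adj_cont[OF conjunct2[OF G[OF t]]] slice_cont[OF cD t] sol_cont[OF conjunct2[OF F[OF t]]]
    by (intro bounded_bilinear.continuous_on[OF bb_mm]) auto
  define J where "J = integral {a..s} (\<lambda>u. G u t ** D(u,t) ** F u t)"
  have Jint: "((\<lambda>u. G u t ** D(u,t) ** F u t) has_integral J) {a..s}"
    unfolding J_def by (intro integrable_integral integrable_continuous_real continuous_on_subset[OF cJ sb])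
  define Y where "Y = F s t ** J"
  define Lc where "Lc = C*C*K*K + C*MD*K*K"
  define L2 where "L2 = C*K*(Lc*(b-a))"
  have Lc0: "Lc \<ge> 0" unfolding Lc_def using C0 K MD by simp
  have L20: "L2 \<ge> 0" unfolding L2_def using C0 K Lc0 ab by simp
  have "\<exists>\<delta>>0. \<forall>t'\<in>{c..d}. norm (t' - t) < \<delta> \<longrightarrow> norm (F s t' - F s t - (t' - t) *\<^sub>R Y) \<le> e * norm (t' - t)"
    if e: "e > 0" for e
  proof -
    define \<epsilon> where "\<epsilon> = e / (L2 + 1)"
    have \<epsilon>: "\<epsilon> > 0" unfolding \<epsilon>_def using e L20 by simp
    obtain \<delta>1 where \<delta>1: "\<delta>1 > 0" "\<forall>t'\<in>{c..d}. \<bar>t' - t\<bar> < \<delta>1 \<longrightarrow> (\<forall>u\<in>{a..b}. norm (B(u,t') - B(u,t) - (t' - t) *\<^sub>R D(u,t)) \<le> \<epsilon> * \<bar>t' - t\<bar>)"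
      using MV[OF \<epsilon>] by blast
    obtain \<delta>2 where \<delta>2: "\<delta>2 > 0" "\<forall>t'\<in>{c..d}. \<bar>t' - t\<bar> < \<delta>2 \<longrightarrow> (\<forall>u\<in>{a..b}. norm (F u t' - F u t) \<le> \<epsilon>)"
      using UC[OF \<epsilon>] by blast
    show ?thesis
    proof (intro exI[of _ "min \<delta>1 \<delta>2"] conjI ballI impI)
      show "min \<delta>1 \<delta>2 > 0" using \<delta>1 \<delta>2 by simp
      fix t' assume t': "t' \<in> {c..d}" "norm (t' - t) < min \<delta>1 \<delta>2"
      define h where "h = t' - t"
      have h1: "\<bar>t' - t\<bar> < \<delta>1" "\<bar>t' - t\<bar> < \<delta>2" using t' by auto
      have Eint: "((\<lambda>u. G u t ** (B(u,t') - B(u,t)) ** F u t' - h *\<^sub>R (G u t ** D(u,t) ** F u t)) has_integral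
          (G s t ** F s t' - mat 1 - h *\<^sub>R J)) {a..s}"
        by (intro has_integral_diff integ[OF t'(1) s] has_integral_cmul Jint)
      have nZ: "norm (G s t ** F s t' - mat 1 - h *\<^sub>R J) \<le> (\<epsilon> * \<bar>h\<bar> * Lc) * (s - a)"
      proof (rule hib_real[OF _ Eint])
        show "0 \<le> \<epsilon> * \<bar>h\<bar> * Lc" using \<epsilon> Lc0 by simp
        show "a \<le> s" using s by simp
        fix x assume x: "x \<in> {a..s}"
        then have xb: "x \<in> {a..b}" using sb by auto
        have xD: "norm (D(x,t)) \<le> MD" using MD(2) xb t by auto
        have eqE: "G x t ** (B(x,t') - B(x,t)) ** F x t' - h *\<^sub>R (G x t ** D(x,t) ** F x t) =
           G x t ** (B(x,t') - B(x,t) - h *\<^sub>R D(x,t)) ** F x t' + h *\<^sub>R (G x t ** D(x,t) ** (F x t' - F x t))"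
          by (simp add: matrix_sub_ldistrib matrix_sub_rdistrib matrix_add_ldistrib matrix_add_rdistrib' mm_scaleR_right mm_scaleR_left algebra_simps)
        have n1: "norm (G x t ** (B(x,t') - B(x,t) - h *\<^sub>R D(x,t)) ** F x t') \<le> C * (\<epsilon> * \<bar>h\<bar>) * C * K * K"
        proof -
          have "norm (G x t ** (B(x,t') - B(x,t) - h *\<^sub>R D(x,t)) ** F x t') \<le>
              norm (G x t) * norm (B(x,t') - B(x,t) - h *\<^sub>R D(x,t)) * norm (F x t') * K * K"
            by (rule norm3[OF K(2,1)])
          also have "\<dots> \<le> C * (\<epsilon> * \<bar>h\<bar>) * C * K * K"
            using bnd[OF xb t] bnd[OF xb t'(1)] \<delta>1(2) t'(1) h1(1) xb K C0 \<epsilon>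
            by (intro mult_right_mono mult_mono) (auto simp: h_def)
          finally show ?thesis .
        qed
        have n2: "norm (h *\<^sub>R (G x t ** D(x,t) ** (F x t' - F x t))) \<le> \<bar>h\<bar> * (C * MD * \<epsilon> * K * K)"
        proof -
          have "norm (G x t ** D(x,t) ** (F x t' - F x t)) \<le> norm (G x t) * norm (D(x,t)) * norm (F x t' - F x t) * K * K"
            by (rule norm3[OF K(2,1)])
          also have "\<dots> \<le> C * MD * \<epsilon> * K * K"
            using bnd[OF xb t] xD \<delta>2(2) t'(1) h1(2) xb K C0 MD(1)
            by (intro mult_right_mono mult_mono) auto
          finally show ?thesis by (simp add: mult_left_mono)
        qed
        have "norm (G x t ** (B(x,t') - B(x,t)) ** F x t' - h *\<^sub>R (G x t ** D(x,t) ** F x t)) \<le>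
            C * (\<epsilon> * \<bar>h\<bar>) * C * K * K + \<bar>h\<bar> * (C * MD * \<epsilon> * K * K)"
          unfolding eqE using n1 n2 norm_triangle_ineq[of "G x t ** (B(x,t') - B(x,t) - h *\<^sub>R D(x,t)) ** F x t'" "h *\<^sub>R (G x t ** D(x,t) ** (F x t' - F x t))"] by linarith
        also have "\<dots> = \<epsilon> * \<bar>h\<bar> * Lc" unfolding Lc_def by (simp add: algebra_simps)
        finally show "norm (G x t ** (B(x,t') - B(x,t)) ** F x t' - h *\<^sub>R (G x t ** D(x,t) ** F x t)) \<le> \<epsilon> * \<bar>h\<bar> * Lc" .
      qed
      have eqM: "F s t' - F s t - h *\<^sub>R Y = F s t ** (G s t ** F s t' - mat 1 - h *\<^sub>R J)"
        unfolding ident[OF s] Y_def by (simp add: matrix_sub_ldistrib mm_scaleR_right mm_scaleR_left)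
      have "norm (F s t' - F s t - h *\<^sub>R Y) \<le> norm (F s t) * norm (G s t ** F s t' - mat 1 - h *\<^sub>R J) * K"
        unfolding eqM by (rule Kb)
      also have "\<dots> \<le> C * ((\<epsilon> * \<bar>h\<bar> * Lc) * (b - a)) * K"
      proof -
        have "(\<epsilon> * \<bar>h\<bar> * Lc) * (s - a) \<le> (\<epsilon> * \<bar>h\<bar> * Lc) * (b - a)"
          using s \<epsilon> Lc0 by (intro mult_left_mono) auto
        then show ?thesis using nZ bnd[OF s t] K C0 by (intro mult_right_mono mult_mono) auto
      qed
      also have "\<dots> = \<epsilon> * L2 * \<bar>h\<bar>" unfolding L2_def by (simp add: mult_ac)
      also have "\<dots> \<le> e * \<bar>h\<bar>"
      proof -
        have "\<epsilon> * L2 \<le> e" unfolding \<epsilon>_def using L20 e by (simp add: field_simps)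
        then show ?thesis by (intro mult_right_mono) auto
      qed
      finally show "norm (F s t' - F s t - (t' - t) *\<^sub>R Y) \<le> e * norm (t' - t)" by (simp add: h_def)
    qed
  qed
  then have "((\<lambda>t. F s t) has_vector_derivative Y) (at t within {c..d})"
    unfolding has_vector_derivative_def has_derivative_within_alt
    using bounded_linear_scaleR_left[of Y] by blast
  then show ?thesis by blast
qed

lemma mm_zero_left[simp]: "(0::'a::semiring_1^'n^'m) ** A = 0"
  by (simp add: matrix_matrix_mult_def vec_eq_iff)
lemma mm_zero_right[simp]: "(A::'a::semiring_1^'n^'m) ** 0 = 0"
  by (simp add: matrix_matrix_mult_def vec_eq_iff)

lemma C1_cont:
  assumes "C1_on_rect f S"
  shows "continuous_on S f"
proof -
  obtain D1 D2 where "\<forall>p\<in>S. (f has_derivative (\<lambda>(h,k). h *\<^sub>R D1 p + k *\<^sub>R D2 p)) (at p within S)"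
    using assms unfolding C1_on_rect_def by blast
  then show ?thesis unfolding continuous_on_eq_continuous_within
    using has_derivative_continuous by blast
qed

lemma C1_partial:
  fixes f :: "real \<times> real \<Rightarrow> 'a::real_normed_vector"
  assumes "C1_on_rect f ({a..b}\<times>{c..d})"
  shows "\<exists>D. continuous_on ({a..b}\<times>{c..d}) D \<and>
    (\<forall>s\<in>{a..b}. \<forall>t\<in>{c..d}. ((\<lambda>t. f(s,t)) has_vector_derivative D(s,t)) (at t within {c..d}))"
proof -
  obtain D1 D2 where D: "continuous_on ({a..b}\<times>{c..d}) D2"
    "\<forall>p\<in>{a..b}\<times>{c..d}. (f has_derivative (\<lambda>(h,k). h *\<^sub>R D1 p + k *\<^sub>R D2 p)) (at p within {a..b}\<times>{c..d})"
    using assms unfolding C1_on_rect_def by blast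
  have "((\<lambda>t. f(s,t)) has_vector_derivative D2(s,t)) (at t within {c..d})"
    if s: "s\<in>{a..b}" and t: "t\<in>{c..d}" for s t
  proof -
    have "((\<lambda>t. (s,t)) has_derivative (\<lambda>k. (0,k))) (at t within {c..d})"
      by (auto intro!: derivative_eq_intros)
    then have "((\<lambda>t. f(s,t)) has_derivative (\<lambda>y. (\<lambda>(h,k). h *\<^sub>R D1 (s,t) + k *\<^sub>R D2 (s,t)) (0,y))) (at t within {c..d})"
      using has_derivative_in_compose2[of "{a..b}\<times>{c..d}" f "\<lambda>p. (\<lambda>(h,k). h *\<^sub>R D1 p + k *\<^sub>R D2 p)" "\<lambda>t. (s,t)" "{c..d}" t "\<lambda>k. (0,k)"]
        D(2) s t by (auto simp: image_subset_iff)
    then show ?thesis by (simp add: has_vector_derivative_def)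
  qed
  then show ?thesis using D(1) by blast
qed

lemma choice2:
  assumes "\<forall>t\<in>T. \<exists>x y. P t x y"
  shows "\<exists>f g. \<forall>t\<in>T. P t (f t) (g t)"
proof -
  have "\<forall>t\<in>T. \<exists>z. P t (fst z) (snd z)" using assms by auto
  then obtain z where "\<forall>t\<in>T. P t (fst (z t)) (snd (z t))" by metis
  then show ?thesis by (intro exI[of _ "\<lambda>t. fst (z t)"] exI[of _ "\<lambda>t. snd (z t)"]) simp
qed

lemma slice_cont2:
  assumes "continuous_on ({a..b}\<times>{c..d}) B" "s \<in> {a..b}"
  shows "continuous_on {c..d} (\<lambda>t. B (s, t))"
  by (rule continuous_on_compose2[OF assms(1)]) (use assms(2) in \<open>auto intro!: continuous_intros\<close>)

theorem theorem1:
  fixes A0 A1 :: "real \<times> real \<Rightarrow> complex ^ 'n::finite ^ 'n"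
    and \<sigma>0 \<sigma>1 \<tau>0 \<tau>1 \<sigma> \<tau> :: real
  assumes "\<sigma>0 \<le> \<sigma>1" "\<tau>0 \<le> \<tau>1"
    and "C1_on_rect A0 ({\<sigma>0..\<sigma>1} \<times> {\<tau>0..\<tau>1})"
    and "C1_on_rect A1 ({\<sigma>0..\<sigma>1} \<times> {\<tau>0..\<tau>1})"
    and "\<sigma> \<in> {\<sigma>0..\<sigma>1}" "\<tau> \<in> {\<tau>0..\<tau>1}"
  defines "P \<equiv> \<lambda>s t. prodint (\<lambda>s'. A1 (s', t)) \<sigma>0 s"
    and "Q \<equiv> \<lambda>s t. prodint (\<lambda>t'. A0 (s, t')) \<tau>0 t"
  defines "T \<equiv> \<lambda>s t. P s t ** Q \<sigma>0 t"
  defines "W \<equiv> matrix_inv (Q \<sigma>0 \<tau>) ** matrix_inv (P \<sigma> \<tau>) ** Q \<sigma> \<tau> ** P \<sigma> \<tau>0"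
    and "L \<equiv> \<lambda>t'. vector_derivative (\<lambda>t. T \<sigma> t) (at t' within {\<tau>0..\<tau>1}) ** matrix_inv (T \<sigma> t')"
  shows "W = matrix_inv (T \<sigma> \<tau>) ** Q \<sigma> \<tau> ** P \<sigma> \<tau>0
       \<and> W = prodint (\<lambda>t'. matrix_inv (T \<sigma> t') ** (A0 (\<sigma>, t') - L t') ** T \<sigma> t') \<tau>0 \<tau>"
proof -
  have ab: "\<sigma>0 \<le> \<sigma>1" and cd: "\<tau>0 \<le> \<tau>1" using assms(1,2) .
  have \<sigma>: "\<sigma> \<in> {\<sigma>0..\<sigma>1}" and \<tau>: "\<tau> \<in> {\<tau>0..\<tau>1}" using assms(5,6) .
  have \<sigma>0: "\<sigma>0 \<in> {\<sigma>0..\<sigma>1}" and \<tau>0: "\<tau>0 \<in> {\<tau>0..\<tau>1}" using ab cd by auto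
  obtain K where K: "K > 0" "\<And>(x::'n cmat) (y::'n cmat). norm (x ** y) \<le> norm x * norm y * K"
    using mm_bound by blast
  have cA0: "continuous_on ({\<sigma>0..\<sigma>1} \<times> {\<tau>0..\<tau>1}) A0" by (rule C1_cont[OF assms(3)])
  have cA1: "continuous_on ({\<sigma>0..\<sigma>1} \<times> {\<tau>0..\<tau>1}) A1" by (rule C1_cont[OF assms(4)])
  obtain D where cD: "continuous_on ({\<sigma>0..\<sigma>1} \<times> {\<tau>0..\<tau>1}) D"
    and dA1: "\<And>s t. s\<in>{\<sigma>0..\<sigma>1} \<Longrightarrow> t\<in>{\<tau>0..\<tau>1} \<Longrightarrow> ((\<lambda>t. A1(s,t)) has_vector_derivative D(s,t)) (at t within {\<tau>0..\<tau>1})"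
    using C1_partial[OF assms(4)] by blast
  obtain M1 where M1: "M1 \<ge> 0" "\<And>x. x\<in>{\<sigma>0..\<sigma>1} \<times> {\<tau>0..\<tau>1} \<Longrightarrow> norm (A1 x) \<le> M1"
    using bound_on_rect[OF cA1] by blast
  obtain M0 where M0: "M0 \<ge> 0" "\<And>x. x\<in>{\<sigma>0..\<sigma>1} \<times> {\<tau>0..\<tau>1} \<Longrightarrow> norm (A0 x) \<le> M0"
    using bound_on_rect[OF cA0] by blast
  define C1 where "C1 = norm (mat 1::'n cmat) * exp (K*M1*(\<sigma>1-\<sigma>0))"
  define C0 where "C0 = norm (mat 1::'n cmat) * exp (K*M0*(\<tau>1-\<tau>0))"
  have "\<forall>t\<in>{\<tau>0..\<tau>1}. \<exists>F G. F \<sigma>0 = mat 1 \<and> G \<sigma>0 = mat 1 \<and> sol (\<lambda>s. A1(s,t)) \<sigma>0 \<sigma>1 F \<and> adj (\<lambda>s. A1(s,t)) \<sigma>0 \<sigma>1 G \<and>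
     (\<forall>u\<in>{\<sigma>0..\<sigma>1}. G u ** F u = mat 1 \<and> F u ** G u = mat 1 \<and> norm (F u) \<le> C1 \<and> norm (G u) \<le> C1)"
  proof
    fix t assume t: "t \<in> {\<tau>0..\<tau>1}"
    show "\<exists>F G. F \<sigma>0 = mat 1 \<and> G \<sigma>0 = mat 1 \<and> sol (\<lambda>s. A1(s,t)) \<sigma>0 \<sigma>1 F \<and> adj (\<lambda>s. A1(s,t)) \<sigma>0 \<sigma>1 G \<and>
     (\<forall>u\<in>{\<sigma>0..\<sigma>1}. G u ** F u = mat 1 \<and> F u ** G u = mat 1 \<and> norm (F u) \<le> C1 \<and> norm (G u) \<le> C1)"
      unfolding C1_def by (rule sol_exists[OF K ab slice_cont[OF cA1 t]]) (use M1(2) t in auto)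
  qed
  then have "\<exists>f g. \<forall>t\<in>{\<tau>0..\<tau>1}. f t \<sigma>0 = mat 1 \<and> g t \<sigma>0 = mat 1 \<and> sol (\<lambda>s. A1(s,t)) \<sigma>0 \<sigma>1 (f t) \<and> adj (\<lambda>s. A1(s,t)) \<sigma>0 \<sigma>1 (g t) \<and>
     (\<forall>u\<in>{\<sigma>0..\<sigma>1}. g t u ** f t u = mat 1 \<and> f t u ** g t u = mat 1 \<and> norm (f t u) \<le> C1 \<and> norm (g t u) \<le> C1)"
    by (rule choice2)
  then obtain Fp Gp where FGp: "\<And>t. t\<in>{\<tau>0..\<tau>1} \<Longrightarrow> Fp t \<sigma>0 = mat 1 \<and> Gp t \<sigma>0 = mat 1 \<and> sol (\<lambda>s. A1(s,t)) \<sigma>0 \<sigma>1 (Fp t) \<and> adj (\<lambda>s. A1(s,t)) \<sigma>0 \<sigma>1 (Gp t) \<and>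
     (\<forall>u\<in>{\<sigma>0..\<sigma>1}. Gp t u ** Fp t u = mat 1 \<and> Fp t u ** Gp t u = mat 1 \<and> norm (Fp t u) \<le> C1 \<and> norm (Gp t u) \<le> C1)"
    by blast
  have Peq: "P s t = Fp t s" if s: "s \<in> {\<sigma>0..\<sigma>1}" and t: "t \<in> {\<tau>0..\<tau>1}" for s t
    unfolding P_def using FGp[OF t] s sol_sub[of _ \<sigma>0 \<sigma>1 "Fp t" s] adj_sub[of _ \<sigma>0 \<sigma>1 "Gp t" s]
    by (intro prodint_unique[of \<sigma>0 s "Fp t" _ "Gp t"]) auto
  have Qex: "\<exists>F G. F \<tau>0 = mat 1 \<and> G \<tau>0 = mat 1 \<and> sol (\<lambda>t. A0(s,t)) \<tau>0 \<tau>1 F \<and> adj (\<lambda>t. A0(s,t)) \<tau>0 \<tau>1 G \<and>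
     (\<forall>u\<in>{\<tau>0..\<tau>1}. G u ** F u = mat 1 \<and> F u ** G u = mat 1 \<and> norm (F u) \<le> C0 \<and> norm (G u) \<le> C0)"
    if s: "s \<in> {\<sigma>0..\<sigma>1}" for s
    unfolding C0_def by (rule sol_exists[OF K cd slice_cont2[OF cA0 s]]) (use M0(2) s in auto)
  obtain Fq0 Gq0 where FGq0: "Fq0 \<tau>0 = mat 1" "Gq0 \<tau>0 = mat 1" "sol (\<lambda>t. A0(\<sigma>0,t)) \<tau>0 \<tau>1 Fq0" "adj (\<lambda>t. A0(\<sigma>0,t)) \<tau>0 \<tau>1 Gq0"
     "\<And>u. u\<in>{\<tau>0..\<tau>1} \<Longrightarrow> Gq0 u ** Fq0 u = mat 1 \<and> Fq0 u ** Gq0 u = mat 1 \<and> norm (Fq0 u) \<le> C0 \<and> norm (Gq0 u) \<le> C0"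
    using Qex[OF \<sigma>0] by blast
  obtain Fq Gq where FGq: "Fq \<tau>0 = mat 1" "Gq \<tau>0 = mat 1" "sol (\<lambda>t. A0(\<sigma>,t)) \<tau>0 \<tau>1 Fq" "adj (\<lambda>t. A0(\<sigma>,t)) \<tau>0 \<tau>1 Gq"
     "\<And>u. u\<in>{\<tau>0..\<tau>1} \<Longrightarrow> Gq u ** Fq u = mat 1 \<and> Fq u ** Gq u = mat 1 \<and> norm (Fq u) \<le> C0 \<and> norm (Gq u) \<le> C0"
    using Qex[OF \<sigma>] by blast
  have Q0eq: "Q \<sigma>0 t = Fq0 t" if t: "t \<in> {\<tau>0..\<tau>1}" for t
    unfolding Q_def using FGq0 t sol_sub[of _ \<tau>0 \<tau>1 Fq0 t] adj_sub[of _ \<tau>0 \<tau>1 Gq0 t]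
    by (intro prodint_unique[of \<tau>0 t Fq0 _ Gq0]) auto
  have Qeq: "Q \<sigma> t = Fq t" if t: "t \<in> {\<tau>0..\<tau>1}" for t
    unfolding Q_def using FGq t sol_sub[of _ \<tau>0 \<tau>1 Fq t] adj_sub[of _ \<tau>0 \<tau>1 Gq t]
    by (intro prodint_unique[of \<tau>0 t Fq _ Gq]) auto
  have invP: "invertible (P \<sigma> t)" "matrix_inv (P \<sigma> t) = Gp t \<sigma>" if t: "t \<in> {\<tau>0..\<tau>1}" for t
    using inv_left_right[of "Gp t \<sigma>" "P \<sigma> t"] FGp[OF t] \<sigma> Peq[OF \<sigma> t] by auto
  have invQ0: "invertible (Q \<sigma>0 t)" "matrix_inv (Q \<sigma>0 t) = Gq0 t" if t: "t \<in> {\<tau>0..\<tau>1}" for t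
    using inv_left_right[of "Gq0 t" "Q \<sigma>0 t"] FGq0(5)[OF t] Q0eq[OF t] by auto
  have invT: "matrix_inv (T \<sigma> t) = matrix_inv (Q \<sigma>0 t) ** matrix_inv (P \<sigma> t)" if t: "t \<in> {\<tau>0..\<tau>1}" for t
    unfolding T_def by (rule inv_mult[OF invP(1)[OF t] invQ0(1)[OF t]])
  have conj1: "W = matrix_inv (T \<sigma> \<tau>) ** Q \<sigma> \<tau> ** P \<sigma> \<tau>0"
    unfolding W_def invT[OF \<tau>] ..
  show ?thesis
  proof (cases "\<tau> = \<tau>0")
    case True
    have "W = mat 1"
    proof -
      have "W = matrix_inv (Q \<sigma>0 \<tau>0) ** matrix_inv (P \<sigma> \<tau>0) ** Q \<sigma> \<tau>0 ** P \<sigma> \<tau>0"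
        unfolding W_def True ..
      also have "\<dots> = matrix_inv (P \<sigma> \<tau>0) ** P \<sigma> \<tau>0"
        using invQ0(2)[OF \<tau>0] Qeq[OF \<tau>0] FGq(1) FGq0(2) by simp
      also have "\<dots> = mat 1" by (rule inv_props(2)[OF invP(1)[OF \<tau>0]])
      finally show ?thesis .
    qed
    then show ?thesis using conj1 True by (simp add: prodint_refl)
  next
    case False
    then have tt: "\<tau>0 < \<tau>" "\<tau>0 < \<tau>1" using \<tau> by auto
    have \<tau>0\<tau>: "\<tau>0 \<le> \<tau>" using tt by simp
    have "\<forall>t\<in>{\<tau>0..\<tau>1}. \<exists>Y. ((\<lambda>t. Fp t \<sigma>) has_vector_derivative Y) (at t within {\<tau>0..\<tau>1})"
    proof
      fix t assume t: "t \<in> {\<tau>0..\<tau>1}"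
      show "\<exists>Y. ((\<lambda>t. Fp t \<sigma>) has_vector_derivative Y) (at t within {\<tau>0..\<tau>1})"
        by (rule param_deriv[where F="\<lambda>s t. Fp t s" and G="\<lambda>s t. Gp t s" and C=C1, OF ab cA1 cD dA1 _ _ _ _ \<sigma> t])
          (use FGp in auto)
    qed
    then obtain Pd where dP: "\<And>t. t\<in>{\<tau>0..\<tau>1} \<Longrightarrow> ((\<lambda>t. Fp t \<sigma>) has_vector_derivative Pd t) (at t within {\<tau>0..\<tau>1})"
      by metis
    define Pt where "Pt t = Fp t \<sigma>" for t
    define Pit where "Pit t = Gp t \<sigma>" for t
    define P0 where "P0 = Fp \<tau>0 \<sigma>"
    define Pi0 where "Pi0 = Gp \<tau>0 \<sigma>"
    define Tt where "Tt t = Pt t ** Fq0 t" for t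
    define Tit where "Tit t = Gq0 t ** Pit t" for t
    define Td where "Td t = Pt t ** (A0(\<sigma>0,t) ** Fq0 t) + Pd t ** Fq0 t" for t
    define Rt where "Rt t = Fq t ** P0" for t
    define Wt where "Wt t = Tit t ** Rt t" for t
    define Ht where "Ht t = Pi0 ** Gq t ** Tt t" for t
    define Bc where "Bc t = Tit t ** (A0(\<sigma>,t) - Td t ** Tit t) ** Tt t" for t
    have dT: "(Tt has_vector_derivative Td t) (at t within {\<tau>0..\<tau>1})" if t: "t \<in> {\<tau>0..\<tau>1}" for t
      unfolding Tt_def[abs_def] Td_def Pt_def
      using mm_deriv[OF dP[OF t], of Fq0 "A0(\<sigma>0,t) ** Fq0 t"] FGq0(3) t unfolding sol_def by auto
    have TiT: "Tit t ** Tt t = mat 1" if t: "t \<in> {\<tau>0..\<tau>1}" for t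
    proof -
      have "Tit t ** Tt t = Gq0 t ** (Pit t ** Pt t) ** Fq0 t"
        unfolding Tit_def Tt_def by (simp add: matrix_mul_assoc)
      then show ?thesis using FGp[OF t] FGq0(5)[OF t] \<sigma> unfolding Pit_def Pt_def by simp
    qed
    have TTi: "Tt t ** Tit t = mat 1" if t: "t \<in> {\<tau>0..\<tau>1}" for t
      using TiT[OF t] matrix_left_right_inverse by blast
    have nTi: "norm (Tit t) \<le> C0 * C1 * K" if t: "t \<in> {\<tau>0..\<tau>1}" for t
    proof -
      have "norm (Tit t) \<le> norm (Gq0 t) * norm (Pit t) * K" unfolding Tit_def by (rule K(2))
      also have "\<dots> \<le> C0 * C1 * K"
        using FGp[OF t] FGq0(5)[OF t] \<sigma> K(1) unfolding Pit_def
        by (intro mult_right_mono mult_mono) (auto intro: order_trans[OF norm_ge_zero])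
      finally show ?thesis .
    qed
    have dTi: "(Tit has_vector_derivative - (Tit t ** Td t ** Tit t)) (at t within {\<tau>0..\<tau>1})"
      if t: "t \<in> {\<tau>0..\<tau>1}" for t
      by (rule inv_deriv[OF dT[OF t] t TiT nTi])
    have Teq: "T \<sigma> t = Tt t" if t: "t \<in> {\<tau>0..\<tau>1}" for t
      unfolding T_def Tt_def Pt_def using Peq[OF \<sigma> t] Q0eq[OF t] by simp
    have Tinv: "matrix_inv (T \<sigma> t) = Tit t" if t: "t \<in> {\<tau>0..\<tau>1}" for t
      unfolding invT[OF t] invQ0(2)[OF t] invP(2)[OF t] Tit_def Pit_def ..
    have vd: "vector_derivative (\<lambda>t. T \<sigma> t) (at t within {\<tau>0..\<tau>1}) = Td t" if t: "t \<in> {\<tau>0..\<tau>1}" for t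
    proof (rule vector_derivative_within_closed_interval[OF tt(2) t])
      show "((\<lambda>t. T \<sigma> t) has_vector_derivative Td t) (at t within {\<tau>0..\<tau>1})"
        by (rule has_vector_derivative_transform[OF t _ dT[OF t]]) (rule Teq)
    qed
    have Bceq: "matrix_inv (T \<sigma> t) ** (A0 (\<sigma>, t) - L t) ** T \<sigma> t = Bc t" if t: "t \<in> {\<tau>0..\<tau>1}" for t
      unfolding Bc_def L_def vd[OF t] Tinv[OF t] by (simp only: Teq[OF t])
    have dR: "(Rt has_vector_derivative A0(\<sigma>,t) ** Fq t ** P0) (at t within {\<tau>0..\<tau>1})"
      if t: "t \<in> {\<tau>0..\<tau>1}" for t
    proof -
      have "((\<lambda>t. Fq t ** P0) has_vector_derivative (Fq t ** 0 + (A0(\<sigma>,t) ** Fq t) ** P0)) (at t within {\<tau>0..\<tau>1})"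
        using FGq(3) t unfolding sol_def by (intro mm_deriv) auto
      then show ?thesis unfolding Rt_def[abs_def] by simp
    qed
    have XY2: "Tt t ** (Tit t ** M) = M" "Tit t ** (Tt t ** M) = M" if t: "t \<in> {\<tau>0..\<tau>1}" for t M
      using TTi[OF t] TiT[OF t] by (simp_all add: matrix_mul_assoc)
    have dW: "(Wt has_vector_derivative Bc t ** Wt t) (at t within {\<tau>0..\<tau>1})" if t: "t \<in> {\<tau>0..\<tau>1}" for t
    proof -
      have "(Wt has_vector_derivative (Tit t ** (A0(\<sigma>,t) ** Fq t ** P0) + (- (Tit t ** Td t ** Tit t)) ** Rt t)) (at t within {\<tau>0..\<tau>1})"
        unfolding Wt_def[abs_def] by (rule mm_deriv[OF dTi[OF t] dR[OF t]])
      moreover have "Tit t ** (A0(\<sigma>,t) ** Fq t ** P0) + (- (Tit t ** Td t ** Tit t)) ** Rt t = Bc t ** Wt t"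
        unfolding Bc_def Wt_def Rt_def
        by (simp add: matrix_mul_assoc[symmetric] XY2[OF t] TiT[OF t] TTi[OF t] matrix_sub_ldistrib matrix_sub_rdistrib matrix_neg_left matrix_neg_right)
      ultimately show ?thesis by simp
    qed
    have dH: "(Ht has_vector_derivative - (Ht t ** Bc t)) (at t within {\<tau>0..\<tau>1})" if t: "t \<in> {\<tau>0..\<tau>1}" for t
    proof -
      have dG: "(Gq has_vector_derivative - (Gq t ** A0(\<sigma>,t))) (at t within {\<tau>0..\<tau>1})"
        using FGq(4) t unfolding adj_def by auto
      have "((\<lambda>t. Pi0 ** Gq t) has_vector_derivative (Pi0 ** (- (Gq t ** A0(\<sigma>,t))) + 0 ** Gq t)) (at t within {\<tau>0..\<tau>1})"
        by (rule mm_deriv[OF _ dG]) (rule has_vector_derivative_const)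
      then have "(Ht has_vector_derivative (Pi0 ** Gq t ** Td t + (Pi0 ** (- (Gq t ** A0(\<sigma>,t))) + 0 ** Gq t) ** Tt t)) (at t within {\<tau>0..\<tau>1})"
        unfolding Ht_def[abs_def] by (rule mm_deriv[OF _ dT[OF t]])
      moreover have "Pi0 ** Gq t ** Td t + (Pi0 ** (- (Gq t ** A0(\<sigma>,t))) + 0 ** Gq t) ** Tt t = - (Ht t ** Bc t)"
        unfolding Bc_def Ht_def
        by (simp add: matrix_mul_assoc[symmetric] XY2[OF t] TiT[OF t] TTi[OF t] matrix_sub_ldistrib matrix_sub_rdistrib matrix_neg_left matrix_neg_right)
      ultimately show ?thesis by simp
    qed
    have PP0: "Pi0 ** P0 = mat 1" using FGp[OF \<tau>0] \<sigma> unfolding Pi0_def P0_def by simp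
    have W0: "Wt \<tau>0 = mat 1"
    proof -
      have "Wt \<tau>0 = Gq0 \<tau>0 ** Pi0 ** (Fq \<tau>0 ** P0)"
        unfolding Wt_def Tit_def Rt_def Pit_def Pi0_def ..
      also have "\<dots> = mat 1" using FGq0(2) FGq(1) PP0 by simp
      finally show ?thesis .
    qed
    have H0: "Ht \<tau>0 = mat 1"
    proof -
      have "Ht \<tau>0 = Pi0 ** Gq \<tau>0 ** (P0 ** Fq0 \<tau>0)"
        unfolding Ht_def Tt_def Pt_def P0_def ..
      also have "\<dots> = mat 1" using FGq0(1) FGq(2) PP0 by simp
      finally show ?thesis .
    qed
    have solW: "sol (\<lambda>t'. matrix_inv (T \<sigma> t') ** (A0 (\<sigma>, t') - L t') ** T \<sigma> t') \<tau>0 \<tau> Wt"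
      unfolding sol_def
    proof
      fix t assume t: "t \<in> {\<tau>0..\<tau>}"
      have t1: "t \<in> {\<tau>0..\<tau>1}" using t \<tau> by auto
      have "(Wt has_vector_derivative Bc t ** Wt t) (at t within {\<tau>0..\<tau>})"
        using has_vector_derivative_within_subset[OF dW[OF t1], of "{\<tau>0..\<tau>}"] \<tau> by auto
      then show "(Wt has_vector_derivative (matrix_inv (T \<sigma> t) ** (A0 (\<sigma>, t) - L t) ** T \<sigma> t) ** Wt t) (at t within {\<tau>0..\<tau>})"
        using Bceq[OF t1] by simp
    qed
    have adjH: "adj (\<lambda>t'. matrix_inv (T \<sigma> t') ** (A0 (\<sigma>, t') - L t') ** T \<sigma> t') \<tau>0 \<tau> Ht"
      unfolding adj_def
    proof
      fix t assume t: "t \<in> {\<tau>0..\<tau>}"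
      have t1: "t \<in> {\<tau>0..\<tau>1}" using t \<tau> by auto
      have "(Ht has_vector_derivative - (Ht t ** Bc t)) (at t within {\<tau>0..\<tau>})"
        using has_vector_derivative_within_subset[OF dH[OF t1], of "{\<tau>0..\<tau>}"] \<tau> by auto
      then show "(Ht has_vector_derivative - (Ht t ** (matrix_inv (T \<sigma> t) ** (A0 (\<sigma>, t) - L t) ** T \<sigma> t))) (at t within {\<tau>0..\<tau>})"
        using Bceq[OF t1] by simp
    qed
    have "prodint (\<lambda>t'. matrix_inv (T \<sigma> t') ** (A0 (\<sigma>, t') - L t') ** T \<sigma> t') \<tau>0 \<tau> = Wt \<tau>"
      by (rule prodint_unique[OF \<tau>0\<tau> W0 solW H0 adjH])
    moreover have "Wt \<tau> = matrix_inv (T \<sigma> \<tau>) ** Q \<sigma> \<tau> ** P \<sigma> \<tau>0"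
      unfolding Wt_def Rt_def Tinv[OF \<tau>] Qeq[OF \<tau>] P0_def Peq[OF \<sigma> \<tau>0] by (simp add: matrix_mul_assoc)
    ultimately show ?thesis using conj1 by simp
  qed
qed

end
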